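(* Let $M\in\mathbb{R}^{n\times n}$ be symmetric positive definite, $N\ge1$, timestep sizes $\delta_0,\dots,\delta_N>0$ fixed, $\theta_0,\theta_{-1}\in\mathbb{R}^n$ fixed, and let $\mathcal X$ be the set of admissible control values. Suppose $\bar P(\theta_i,u)=Q(\theta_i)+b(\theta_i,u)$ where $Q:\mathbb{R}^n\to\mathbb{R}$ and, for each $u\in\mathcal X$, $b(\cdot,u)$ are twice differentiable with locally Lipschitz second derivatives and curvature bounded with a constant $L$ independent of $u$, and $\|\partial^2 b/\partial\theta_i\partial u\|$ is uniformly bounded over all $\theta_i\in\mathbb{R}^n$, $u\in\mathcal X$. With $\bar E_i=\frac{1}{2\delta_i^2}\|\theta_i-(1+\delta_i/\delta_{i-1})\theta_{i-1}+(\delta_i/\delta_{i-1})\theta_{i-2}\|_M^2+\bar P(\theta_i,u_{\iota(i)})$ for $i=1,\dots,N$, let $J_\theta(\theta,u)$ be the block matrix with $(i,k)$ block $\partial^2\bar E_i/\partial\theta_i\partial\theta_k$ ($i,k=1,\dots,N$), and let $J_u(\theta,u)$ be the block-diagonal matrix with diagonal blocks $\partial^2\bar E_i/\partial\theta_i\partial u_{\iota(i)}$. Then (i) $\sigma_{\max}(J_\theta)$ and (ii) $\sigma_{\max}(J_u)$ are upper bounded uniformly over all $\theta=(\theta_1,\dots,\theta_N)$ and all controls in $\mathcal X$.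
   Context: $\|x\|_M^2=x^TMx$; $\sigma_{\max}$ is the largest singular value. A function is $L$-curvature bounded if $\phi+\frac L2\|\cdot\|^2$ is convex and $\nabla\phi$ is $L$-Lipschitz. The map $\iota$ assigns to each frame index the index of the control used at that frame. *)

theory Defs
  imports "HOL-Analysis.Analysis"
begin

definition grad :: "(real^'n \<Rightarrow> real) \<Rightarrow> real^'n \<Rightarrow> real^'n" where
  "grad f x = (THE G. GDERIV f x :> G)"

definition jac :: "(real^'a \<Rightarrow> real^'b) \<Rightarrow> real^'a \<Rightarrow> real^'a^'b" where
  "jac g x = (THE A. (g has_derivative (\<lambda>h. A *v h)) (at x))"

definition hess :: "(real^'n \<Rightarrow> real) \<Rightarrow> real^'n \<Rightarrow> real^'n^'n" where
  "hess f x = jac (grad f) x"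

definition twice_diff_loclip :: "(real^'n \<Rightarrow> real) \<Rightarrow> bool" where
  "twice_diff_loclip \<phi> \<longleftrightarrow>
     (\<forall>x. \<phi> differentiable (at x)) \<and>
     (\<forall>x. grad \<phi> differentiable (at x)) \<and>
     (\<forall>x. \<exists>r>0. \<exists>K. K-lipschitz_on (ball x r) (hess \<phi>))"

definition curv_bounded :: "real \<Rightarrow> (real^'n \<Rightarrow> real) \<Rightarrow> bool" where
  "curv_bounded L \<phi> \<longleftrightarrow>
     convex_on UNIV (\<lambda>x. \<phi> x + L / 2 * (norm x)^2) \<and> L-lipschitz_on UNIV (grad \<phi>)"

definition pgrad :: "((int \<Rightarrow> real^'n) \<Rightarrow> real) \<Rightarrow> int \<Rightarrow> (int \<Rightarrow> real^'n) \<Rightarrow> real^'n" where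
  "pgrad f i \<theta> = grad (\<lambda>x. f (\<theta>(i := x))) (\<theta> i)"

definition blk_apply :: "('i \<Rightarrow> 'i \<Rightarrow> real^'a^'b) \<Rightarrow> 'i set \<Rightarrow> ('i \<Rightarrow> real^'a) \<Rightarrow> 'i \<Rightarrow> real^'b" where
  "blk_apply B I v i = (\<Sum>k\<in>I. B i k *v v k)"

definition blk_tapply :: "('i \<Rightarrow> 'i \<Rightarrow> real^'a^'b) \<Rightarrow> 'i set \<Rightarrow> ('i \<Rightarrow> real^'b) \<Rightarrow> 'i \<Rightarrow> real^'a" where
  "blk_tapply B I w k = (\<Sum>i\<in>I. transpose (B i k) *v w i)"

definition sigma_max :: "('i \<Rightarrow> 'i \<Rightarrow> real^'a^'b) \<Rightarrow> 'i set \<Rightarrow> real" where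
  "sigma_max B I = sqrt (Max {ev. \<exists>v. (\<exists>k\<in>I. v k \<noteq> 0) \<and>
       (\<forall>k\<in>I. blk_tapply B I (blk_apply B I v) k = ev *\<^sub>R v k)})"

definition Mnorm2 :: "real^'n^'n \<Rightarrow> real^'n \<Rightarrow> real" where
  "Mnorm2 M x = x \<bullet> (M *v x)"

text \<open>E-bar_i for frame i; \<theta> frames indexed by int (\<theta> 0, \<theta> (-1) given),
  controls u indexed by nat, \<iota> maps frames to control indices.\<close>
definition Ebar :: "real^'n^'n \<Rightarrow> (int \<Rightarrow> real) \<Rightarrow> (real^'n \<Rightarrow> real) \<Rightarrow> (real^'n \<Rightarrow> real^'m \<Rightarrow> real)
    \<Rightarrow> (int \<Rightarrow> nat) \<Rightarrow> int \<Rightarrow> (int \<Rightarrow> real^'n) \<Rightarrow> (nat \<Rightarrow> real^'m) \<Rightarrow> real" where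
  "Ebar M \<delta> Q b \<iota> i \<theta> u =
     1 / (2 * (\<delta> i)^2) *
       Mnorm2 M (\<theta> i - (1 + \<delta> i / \<delta> (i - 1)) *\<^sub>R \<theta> (i - 1) + (\<delta> i / \<delta> (i - 1)) *\<^sub>R \<theta> (i - 2))
     + (Q (\<theta> i) + b (\<theta> i) (u (\<iota> i)))"

definition J_theta where
  "J_theta M \<delta> Q b \<iota> \<theta> u i k =
     jac (\<lambda>y. pgrad (\<lambda>\<theta>'. Ebar M \<delta> Q b \<iota> i \<theta>' u) i (\<theta>(k := y))) (\<theta> k)"

definition J_u where
  "J_u M \<delta> Q b \<iota> \<theta> u i k =
     (if i = k then jac (\<lambda>w. pgrad (\<lambda>\<theta>'. Ebar M \<delta> Q b \<iota> i \<theta>' (u(\<iota> i := w))) i \<theta>) (u (\<iota> i))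
      else 0)"

end

theory Submission
  imports Defs
begin

lemma grad_unique:
  fixes f :: "real^'n \<Rightarrow> real"
  assumes "GDERIV f x :> G" shows "grad f x = G"
  unfolding grad_def
proof (rule the_equality)
  show "GDERIV f x :> G" by fact
next
  fix G' assume "GDERIV f x :> G'"
  then have "(\<lambda>h. h \<bullet> G') = (\<lambda>h. h \<bullet> G)"
    using assms unfolding gderiv_def by (rule has_derivative_unique)
  then have "(G' - G) \<bullet> G' = (G' - G) \<bullet> G" by metis
  then have "(G' - G) \<bullet> (G' - G) = 0" by (simp add: inner_diff_right)
  then show "G' = G" by simp
qed

lemma grad_none:
  fixes f :: "real^'n \<Rightarrow> real"
  assumes "\<not> (\<exists>G. GDERIV f x :> G)" shows "grad f x = (THE G. False)"
proof -
  have "(\<lambda>G. GDERIV f x :> G) = (\<lambda>G. False)" using assms by auto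
  then show ?thesis unfolding grad_def by simp
qed

lemma grad_exists:
  fixes f :: "real^'n \<Rightarrow> real"
  assumes "f differentiable (at x)" shows "GDERIV f x :> grad f x"
proof -
  obtain D where D: "(f has_derivative D) (at x)" using assms unfolding differentiable_def by blast
  have lin: "linear D" using D has_derivative_linear by blast
  have "D = (\<lambda>h. h \<bullet> adjoint D 1)"
    using adjoint_works[OF lin, of _ 1] by (auto simp: fun_eq_iff)
  then have "GDERIV f x :> adjoint D 1" unfolding gderiv_def using D by simp
  then show ?thesis using grad_unique by metis
qed

lemma jac_unique:
  fixes g :: "real^'a \<Rightarrow> real^'b"
  assumes "(g has_derivative D) (at x)" shows "jac g x = matrix D"
  unfolding jac_def
proof (rule the_equality)
  have "linear D" using assms has_derivative_linear by blast
  then show "(g has_derivative (\<lambda>h. matrix D *v h)) (at x)" using assms by simp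
next
  fix A assume "(g has_derivative (\<lambda>h. A *v h)) (at x)"
  then have "(\<lambda>h. A *v h) = D" using assms by (rule has_derivative_unique)
  then show "A = matrix D" by (metis matrix_of_matrix_vector_mul)
qed

lemma jac_none:
  fixes g :: "real^'a \<Rightarrow> real^'b"
  assumes "\<not> g differentiable (at x)" shows "jac g x = (THE A. False)"
proof -
  have "(\<lambda>A. (g has_derivative (\<lambda>h. A *v h)) (at x)) = (\<lambda>A. False)"
    using assms unfolding differentiable_def by auto
  then show ?thesis unfolding jac_def by simp
qed

lemma matrix_bound:
  fixes A :: "real^'a^'b"
  shows "norm (A *v x) \<le> (real CARD('b) * real CARD('a) * norm A) * norm x"
proof -
  have "\<And>i j. \<bar>A$i$j\<bar> \<le> norm A"
  proof -
    fix i j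
    have "\<bar>A$i$j\<bar> \<le> norm (A$i)" by (rule component_le_norm_cart)
    also have "\<dots> \<le> norm A" by (rule Finite_Cartesian_Product.norm_nth_le)
    finally show "\<bar>A$i$j\<bar> \<le> norm A" .
  qed
  then have "onorm ((*v) A) \<le> real CARD('b) * real CARD('a) * norm A"
    by (rule onorm_le_matrix_component)
  moreover have "norm (A *v x) \<le> onorm ((*v) A) * norm x"
    by (rule onorm) simp
  ultimately show ?thesis by (meson mult_right_mono norm_ge_zero order_trans)
qed

lemma lip_deriv_bound:
  fixes f :: "'a::real_normed_vector \<Rightarrow> 'b::real_normed_vector"
  assumes D: "(f has_derivative D) (at x)" and lip: "L-lipschitz_on UNIV f"
  shows "norm (D h) \<le> L * norm h"
proof (rule ccontr)
  assume neg: "\<not> norm (D h) \<le> L * norm h"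
  have L0: "L \<ge> 0" using lip lipschitz_on_nonneg by blast
  have bl: "bounded_linear D" using D has_derivative_bounded_linear by blast
  have h0: "h \<noteq> 0" using neg bl L0 by (auto simp: linear_simps)
  define e where "e = (norm (D h) - L * norm h) / norm h"
  have e0: "e > 0" using neg h0 by (simp add: e_def)
  have "(\<lambda>k. norm (f (x + k) - f x - D k) / norm k) \<midarrow>0\<rightarrow> 0"
    using D by (simp add: has_derivative_at)
  then obtain s where s0: "s > 0" and s: "\<And>k. k \<noteq> 0 \<and> norm k < s \<Longrightarrow>
      norm (norm (f (x + k) - f x - D k) / norm k) < e"
    using e0 unfolding LIM_eq by fastforce
  define t where "t = s / (2 * norm h)"
  have t0: "t > 0" using s0 h0 by (simp add: t_def)
  define k where "k = t *\<^sub>R h"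
  have nk: "norm k = s / 2" using h0 t0 s0 by (simp add: k_def t_def)
  have k0: "k \<noteq> 0" using h0 t0 by (simp add: k_def)
  have "norm (f (x + k) - f x - D k) / norm k < e"
    using s[of k] k0 nk s0 by (simp del: divide_const_simps)
  then have A: "norm (f (x + k) - f x - D k) < e * norm k"
    using k0 by (simp add: divide_less_eq)
  have B: "norm (f (x + k) - f x) \<le> L * norm k"
    using lipschitz_onD[OF lip, of "x + k" x] by (simp add: dist_norm)
  have Dk: "D k = t *\<^sub>R D h" using bl by (simp add: k_def linear_simps)
  have "norm (D k) \<le> norm (f (x + k) - f x) + norm (f (x + k) - f x - D k)"
    by (metis add.commute diff_add_cancel norm_triangle_ineq4 add_diff_cancel_left' norm_minus_commute norm_triangle_sub)
  also have "\<dots> < L * norm k + e * norm k" using A B by simp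
  also have "\<dots> = t * norm (D h)" using h0 t0 by (simp add: k_def e_def field_simps)
  finally show False using Dk t0 by simp
qed

lemma Max_infinite: "\<not> finite (S::real set) \<Longrightarrow> Max S = Max {}"
  by (simp add: Max.eq_fold')

lemma ev_bound:
  fixes B :: "'i \<Rightarrow> 'i \<Rightarrow> real^'a^'b"
  assumes fin: "finite I" and bnd: "\<And>i k x. i \<in> I \<Longrightarrow> k \<in> I \<Longrightarrow> norm (B i k *v x) \<le> \<beta> * norm x"
    and b0: "\<beta> \<ge> 0"
    and nz: "\<exists>k\<in>I. v k \<noteq> 0" and eig: "\<forall>k\<in>I. blk_tapply B I (blk_apply B I v) k = ev *\<^sub>R v k"
  shows "ev \<le> real (card I) ^ 3 * \<beta>\<^sup>2"
proof -
  define w where "w = blk_apply B I v"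
  define R2 where "R2 = (\<Sum>k\<in>I. norm (v k) ^ 2)"
  define n where "n = real (card I)"
  have R2pos: "R2 > 0"
  proof -
    obtain k where k: "k \<in> I" "v k \<noteq> 0" using nz by blast
    have "norm (v k) ^ 2 \<le> R2" unfolding R2_def
      by (rule member_le_sum) (use k fin in auto)
    moreover have "norm (v k) ^ 2 > 0" using k by simp
    ultimately show ?thesis by linarith
  qed
  have "(\<Sum>k\<in>I. blk_tapply B I w k \<bullet> v k) = ev * R2"
    using eig unfolding w_def R2_def
    by (simp add: sum_distrib_left power2_norm_eq_inner)
  moreover have "(\<Sum>k\<in>I. blk_tapply B I w k \<bullet> v k) = (\<Sum>i\<in>I. w i \<bullet> w i)"
  proof -
    have "(\<Sum>k\<in>I. blk_tapply B I w k \<bullet> v k) = (\<Sum>k\<in>I. \<Sum>i\<in>I. w i \<bullet> (B i k *v v k))"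
      unfolding blk_tapply_def by (simp add: inner_sum_left dot_lmul_matrix)
    also have "\<dots> = (\<Sum>i\<in>I. \<Sum>k\<in>I. w i \<bullet> (B i k *v v k))" by (rule sum.swap)
    also have "\<dots> = (\<Sum>i\<in>I. w i \<bullet> w i)"
      by (simp add: w_def blk_apply_def inner_sum_right)
    finally show ?thesis .
  qed
  moreover have "(\<Sum>i\<in>I. w i \<bullet> w i) \<le> (\<Sum>i\<in>I. n^2 * \<beta>^2 * R2)"
  proof (rule sum_mono)
    fix i assume i: "i \<in> I"
    have vk: "norm (v k) \<le> sqrt R2" if "k \<in> I" for k
    proof -
      have "norm (v k) ^ 2 \<le> R2" unfolding R2_def
        by (rule member_le_sum) (use that fin in auto)
      then show ?thesis by (simp add: real_le_rsqrt)
    qed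
    have "norm (w i) \<le> (\<Sum>k\<in>I. norm (B i k *v v k))"
      unfolding w_def blk_apply_def by (rule norm_sum)
    also have "\<dots> \<le> (\<Sum>k\<in>I. \<beta> * sqrt R2)"
      by (rule sum_mono) (meson bnd i vk b0 mult_left_mono order_trans)
    also have "\<dots> = n * \<beta> * sqrt R2" by (simp add: n_def)
    finally have "norm (w i) \<le> n * \<beta> * sqrt R2" .
    then have "norm (w i) ^ 2 \<le> (n * \<beta> * sqrt R2) ^ 2"
      by (simp add: power_mono)
    also have "\<dots> = n^2 * \<beta>^2 * R2" using R2pos by (simp add: power_mult_distrib)
    finally show "w i \<bullet> w i \<le> n^2 * \<beta>^2 * R2" by (simp add: power2_norm_eq_inner)
  qed
  moreover have "(\<Sum>i\<in>I. n^2 * \<beta>^2 * R2) = (n ^ 3 * \<beta>\<^sup>2) * R2"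
    by (simp add: n_def power3_eq_cube power2_eq_square)
  ultimately have "ev * R2 \<le> (n ^ 3 * \<beta>\<^sup>2) * R2" by linarith
  then show ?thesis using R2pos n_def by simp
qed

lemma sigma_bound:
  fixes B :: "'i \<Rightarrow> 'i \<Rightarrow> real^'a^'b"
  assumes fin: "finite I" and bnd: "\<And>i k x. i \<in> I \<Longrightarrow> k \<in> I \<Longrightarrow> norm (B i k *v x) \<le> \<beta> * norm x"
    and b0: "\<beta> \<ge> 0"
  shows "sigma_max B I \<le> max (sqrt (Max {})) (sqrt (real (card I) ^ 3 * \<beta>\<^sup>2))"
proof -
  define S where "S = {ev. \<exists>v. (\<exists>k\<in>I. v k \<noteq> 0) \<and>
       (\<forall>k\<in>I. blk_tapply B I (blk_apply B I v) k = ev *\<^sub>R v k)}"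
  have Sb: "\<And>ev. ev \<in> S \<Longrightarrow> ev \<le> real (card I) ^ 3 * \<beta>\<^sup>2"
    unfolding S_def using ev_bound[OF fin _ b0, of B] bnd by blast
  have "Max S \<le> max (Max {}) (real (card I) ^ 3 * \<beta>\<^sup>2)"
  proof (cases "finite S \<and> S \<noteq> {}")
    case True
    then have "Max S \<in> S" by (intro Max_in) auto
    then show ?thesis using Sb by fastforce
  next
    case False
    then have "Max S = Max {}" using Max_infinite by blast
    then show ?thesis by simp
  qed
  then have "sqrt (Max S) \<le> sqrt (max (Max {}) (real (card I) ^ 3 * \<beta>\<^sup>2))" by simp
  also have "\<dots> = max (sqrt (Max {})) (sqrt (real (card I) ^ 3 * \<beta>\<^sup>2))"
    by (simp add: max_def)
  finally show ?thesis unfolding sigma_max_def S_def .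
qed

lemma sym_inner: "transpose M = M \<Longrightarrow> (v::real^'n) \<bullet> (M *v h) = h \<bullet> (M *v v)"
  by (metis dot_lmul_matrix inner_commute transpose_matrix_vector)

lemma gderiv_quad:
  fixes M :: "real^'n^'n"
  assumes sym: "transpose M = M"
  shows "GDERIV (\<lambda>x. c * Mnorm2 M (x - p + q)) x :> (2*c) *\<^sub>R (M *v (x - p + q))"
  unfolding gderiv_def Mnorm2_def
proof -
  let ?v = "x - p + q"
  have dv: "((\<lambda>x. x - p + q) has_derivative (\<lambda>h. h)) (at x)"
    by (auto intro!: derivative_eq_intros)
  have dM: "((\<lambda>x. M *v (x - p + q)) has_derivative (\<lambda>h. M *v h)) (at x)"
    by (rule bounded_linear.has_derivative[OF matrix_vector_mul_bounded_linear dv])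
  have "((\<lambda>x. (x - p + q) \<bullet> (M *v (x - p + q))) has_derivative
     (\<lambda>h. (x - p + q) \<bullet> (M *v h) + h \<bullet> (M *v (x - p + q)))) (at x)"
    by (rule has_derivative_inner[OF dv dM])
  then have "((\<lambda>x. c * ((x - p + q) \<bullet> (M *v (x - p + q)))) has_derivative
     (\<lambda>h. c * ((x - p + q) \<bullet> (M *v h) + h \<bullet> (M *v (x - p + q))))) (at x)"
    by (rule has_derivative_mult_right)
  moreover have "(\<lambda>h. c * ((x - p + q) \<bullet> (M *v h) + h \<bullet> (M *v (x - p + q)))) =
      (\<lambda>h. h \<bullet> ((2*c) *\<^sub>R (M *v (x - p + q))))"
    using sym_inner[OF sym] by (auto simp: fun_eq_iff algebra_simps)
  ultimately show "((\<lambda>x. c * ((x - p + q) \<bullet> (M *v (x - p + q)))) has_derivative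
     (\<lambda>h. h \<bullet> ((2*c) *\<^sub>R (M *v (x - p + q))))) (at x)" by simp
qed

lemma gderiv_Ebar:
  fixes M :: "real^'n^'n"
  assumes sym: "transpose M = M"
    and gQ: "GDERIV Q x :> GQ" and gb: "GDERIV (\<lambda>y. b y (u (\<iota> i))) x :> Gb"
  shows "GDERIV (\<lambda>x. Ebar M \<delta> Q b \<iota> i (\<theta>(i := x)) u) x :>
     (1 / (\<delta> i)^2) *\<^sub>R (M *v (x - (1 + \<delta> i / \<delta> (i - 1)) *\<^sub>R \<theta> (i - 1) + (\<delta> i / \<delta> (i - 1)) *\<^sub>R \<theta> (i - 2)))
       + (GQ + Gb)"
proof -
  have e: "(\<lambda>x. Ebar M \<delta> Q b \<iota> i (\<theta>(i := x)) u) = (\<lambda>x.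
     1 / (2 * (\<delta> i)^2) *
       Mnorm2 M (x - (1 + \<delta> i / \<delta> (i - 1)) *\<^sub>R \<theta> (i - 1) + (\<delta> i / \<delta> (i - 1)) *\<^sub>R \<theta> (i - 2))
     + (Q x + b x (u (\<iota> i))))"
    by (simp add: Ebar_def fun_eq_iff)
  have q: "GDERIV (\<lambda>x. 1 / (2 * (\<delta> i)^2) *
       Mnorm2 M (x - (1 + \<delta> i / \<delta> (i - 1)) *\<^sub>R \<theta> (i - 1) + (\<delta> i / \<delta> (i - 1)) *\<^sub>R \<theta> (i - 2))) x
     :> (2 * (1 / (2 * (\<delta> i)^2))) *\<^sub>R (M *v (x - (1 + \<delta> i / \<delta> (i - 1)) *\<^sub>R \<theta> (i - 1) + (\<delta> i / \<delta> (i - 1)) *\<^sub>R \<theta> (i - 2)))"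
    by (rule gderiv_quad[OF sym])
  have "(2 * (1 / (2 * (\<delta> i)^2))) = 1 / (\<delta> i)^2" by simp
  then show ?thesis unfolding e
    using GDERIV_add[OF q GDERIV_add[OF gQ gb]] by simp
qed

lemma pgrad_Ebar:
  fixes M :: "real^'n^'n"
  assumes sym: "transpose M = M"
    and gQ: "GDERIV Q (\<theta> i) :> GQ" and gb: "GDERIV (\<lambda>y. b y (u (\<iota> i))) (\<theta> i) :> Gb"
  shows "pgrad (\<lambda>\<theta>'. Ebar M \<delta> Q b \<iota> i \<theta>' u) i \<theta> =
     (1 / (\<delta> i)^2) *\<^sub>R (M *v (\<theta> i - (1 + \<delta> i / \<delta> (i - 1)) *\<^sub>R \<theta> (i - 1) + (\<delta> i / \<delta> (i - 1)) *\<^sub>R \<theta> (i - 2)))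
       + (GQ + Gb)"
  unfolding pgrad_def by (rule grad_unique, rule gderiv_Ebar[where \<theta>=\<theta> and \<delta>=\<delta> and u=u and \<iota>=\<iota> and i=i and b=b, OF sym gQ gb])

lemma transfer:
  fixes g h :: "real^'a \<Rightarrow> real^'b"
  assumes alt: "\<And>w. g w = h w + V \<or> g w = h w" and at: "g u0 = h u0 + V"
    and hd: "h differentiable (at u0)"
  shows "jac g u0 = jac h u0 \<or> jac g u0 = (THE A. False)"
proof (cases "g differentiable (at u0)")
  case False
  then show ?thesis using jac_none by blast
next
  case True
  obtain D where D: "(h has_derivative D) (at u0)" using hd unfolding differentiable_def by blast
  have "\<exists>e>0. \<forall>w\<in>ball u0 e. g w = h w + V"
  proof (cases "V = 0")
    case True
    then show ?thesis using alt by (intro exI[of _ 1]) auto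
  next
    case V: False
    have "isCont (\<lambda>w. g w - h w) u0"
      using True hd by (intro continuous_intros differentiable_imp_continuous_within)
    then have "((\<lambda>w. g w - h w) \<longlongrightarrow> V) (at u0)" using at by (simp add: isCont_def)
    moreover have "norm V > 0" using V by simp
    ultimately have "eventually (\<lambda>w. dist (g w - h w) V < norm V) (at u0)"
      unfolding tendsto_iff by blast
    then obtain e where e: "e > 0" and ee: "\<And>w. w \<noteq> u0 \<and> dist w u0 < e \<Longrightarrow> dist (g w - h w) V < norm V"
      unfolding eventually_at by auto
    show ?thesis
    proof (intro exI[of _ e] conjI ballI e)
      fix w assume w: "w \<in> ball u0 e"
      show "g w = h w + V"
      proof (cases "w = u0")
        case True then show ?thesis using at by simp
      next
        case False
        then have "dist (g w - h w) V < norm V" using ee w by (simp add: dist_commute)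
        then have "g w \<noteq> h w" by (auto simp: dist_norm)
        then show ?thesis using alt by blast
      qed
    qed
  qed
  then obtain e where e: "e > 0" "\<And>w. w \<in> ball u0 e \<Longrightarrow> g w = h w + V" by blast
  have "((\<lambda>w. h w + V) has_derivative D) (at u0)" using D by (auto intro!: derivative_eq_intros)
  then have "(g has_derivative D) (at u0)"
    by (rule has_derivative_transform_within_open[where s="ball u0 e"]) (use e in auto)
  then show ?thesis using jac_unique D by metis
qed

lemma aff_deriv:
  fixes M :: "real^'n^'n"
  shows "((\<lambda>y. s *\<^sub>R (M *v (c0 + \<alpha> *\<^sub>R y)) + c1) has_derivative (\<lambda>h. s *\<^sub>R (M *v (\<alpha> *\<^sub>R h)))) (at x)"
proof -
  have dv: "((\<lambda>y. c0 + \<alpha> *\<^sub>R y) has_derivative (\<lambda>h. \<alpha> *\<^sub>R h)) (at x)"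
    by (auto intro!: derivative_eq_intros)
  have dM: "((\<lambda>y. M *v (c0 + \<alpha> *\<^sub>R y)) has_derivative (\<lambda>h. M *v (\<alpha> *\<^sub>R h))) (at x)"
    by (rule bounded_linear.has_derivative[OF matrix_vector_mul_bounded_linear dv])
  show ?thesis by (auto intro!: derivative_eq_intros dM)
qed

lemma Jtheta_block:
  fixes M :: "real^'n^'n" and Q :: "real^'n \<Rightarrow> real" and b :: "real^'n \<Rightarrow> real^'m \<Rightarrow> real"
  assumes sym: "transpose M = M"
    and Qd: "\<forall>x. Q differentiable (at x)" and Qgd: "\<forall>x. grad Q differentiable (at x)"
    and Qlip: "L-lipschitz_on UNIV (grad Q)"
    and bd: "\<forall>x. (\<lambda>y. b y (u (\<iota> i))) differentiable (at x)"
    and bgd: "\<forall>x. grad (\<lambda>y. b y (u (\<iota> i))) differentiable (at x)"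
    and blip: "L-lipschitz_on UNIV (grad (\<lambda>y. b y (u (\<iota> i))))"
  shows "norm (J_theta M \<delta> Q b \<iota> \<theta> u i k *v h) \<le>
    (1 / (\<delta> i)^2 * (real CARD('n) * real CARD('n) * norm M) *
       (1 + \<bar>1 + \<delta> i / \<delta> (i - 1)\<bar> + \<bar>\<delta> i / \<delta> (i - 1)\<bar>) + 2 * L) * norm h"
proof -
  define s where "s = 1 / (\<delta> i)^2"
  define a where "a = 1 + \<delta> i / \<delta> (i - 1)"
  define r where "r = \<delta> i / \<delta> (i - 1)"
  define cM where "cM = real CARD('n) * real CARD('n) * norm M"
  define gb where "gb = grad (\<lambda>y. b y (u (\<iota> i)))"
  have s0: "s \<ge> 0" by (simp add: s_def)
  have cM0: "cM \<ge> 0" by (simp add: cM_def)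
  have L0: "L \<ge> 0" using Qlip lipschitz_on_nonneg by blast
  have Mb: "\<And>v. norm (M *v v) \<le> cM * norm v" unfolding cM_def by (rule matrix_bound)
  have PG: "\<And>\<theta>'. pgrad (\<lambda>\<theta>'. Ebar M \<delta> Q b \<iota> i \<theta>' u) i \<theta>' =
     s *\<^sub>R (M *v (\<theta>' i - a *\<^sub>R \<theta>' (i - 1) + r *\<^sub>R \<theta>' (i - 2))) + (grad Q (\<theta>' i) + gb (\<theta>' i))"
    unfolding s_def a_def r_def gb_def
    by (rule pgrad_Ebar[OF sym grad_exists grad_exists]) (use Qd bd in auto)
  have J: "J_theta M \<delta> Q b \<iota> \<theta> u i k = jac (\<lambda>y. s *\<^sub>R (M *v ((\<theta>(k:=y)) i - a *\<^sub>R (\<theta>(k:=y)) (i - 1)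
      + r *\<^sub>R (\<theta>(k:=y)) (i - 2))) + (grad Q ((\<theta>(k:=y)) i) + gb ((\<theta>(k:=y)) i))) (\<theta> k)"
    unfolding J_theta_def PG ..
  show ?thesis
  proof (cases "k = i")
    case True
    obtain DQ where DQ: "(grad Q has_derivative DQ) (at (\<theta> i))" using Qgd unfolding differentiable_def by blast
    obtain Db where Db: "(gb has_derivative Db) (at (\<theta> i))" using bgd unfolding differentiable_def gb_def by blast
    have fe: "(\<lambda>y. s *\<^sub>R (M *v ((\<theta>(k:=y)) i - a *\<^sub>R (\<theta>(k:=y)) (i - 1)
      + r *\<^sub>R (\<theta>(k:=y)) (i - 2))) + (grad Q ((\<theta>(k:=y)) i) + gb ((\<theta>(k:=y)) i))) =
      (\<lambda>y. s *\<^sub>R (M *v ((- a *\<^sub>R \<theta> (i - 1) + r *\<^sub>R \<theta> (i - 2)) + 1 *\<^sub>R y)) + (grad Q y + gb y))"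
      using True by (auto simp: fun_eq_iff algebra_simps)
    have dA: "((\<lambda>y. s *\<^sub>R (M *v ((- a *\<^sub>R \<theta> (i - 1) + r *\<^sub>R \<theta> (i - 2)) + 1 *\<^sub>R y)) + 0) has_derivative
        (\<lambda>h. s *\<^sub>R (M *v (1 *\<^sub>R h)))) (at (\<theta> i))" by (rule aff_deriv)
    have dF: "((\<lambda>y. s *\<^sub>R (M *v ((- a *\<^sub>R \<theta> (i - 1) + r *\<^sub>R \<theta> (i - 2)) + 1 *\<^sub>R y)) + (grad Q y + gb y)) has_derivative
        (\<lambda>h. s *\<^sub>R (M *v (1 *\<^sub>R h)) + (DQ h + Db h))) (at (\<theta> i))"
      using has_derivative_add[OF dA has_derivative_add[OF DQ Db]] by simp
    have bl: "bounded_linear (\<lambda>h. s *\<^sub>R (M *v (1 *\<^sub>R h)) + (DQ h + Db h))"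
      using dF has_derivative_bounded_linear by blast
    have "J_theta M \<delta> Q b \<iota> \<theta> u i k *v h = s *\<^sub>R (M *v h) + (DQ h + Db h)"
      unfolding J fe using True jac_unique[OF dF] matrix_vector_mul(3)[OF bl] by (metis scaleR_one)
    also have "norm \<dots> \<le> s * (cM * norm h) + (L * norm h + L * norm h)"
    proof -
      have "norm (DQ h) \<le> L * norm h" by (rule lip_deriv_bound[OF DQ Qlip])
      moreover have "norm (Db h) \<le> L * norm h" by (rule lip_deriv_bound[OF Db blip[folded gb_def]])
      moreover have "norm (s *\<^sub>R (M *v h)) \<le> s * (cM * norm h)" using Mb s0 by (simp add: mult_left_mono)
      ultimately show ?thesis by (meson add_mono norm_triangle_le order_trans norm_triangle_ineq)
    qed
    also have "\<dots> \<le> (s * cM * (1 + \<bar>a\<bar> + \<bar>r\<bar>) + 2 * L) * norm h"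
    proof -
      have "s * cM * 1 \<le> s * cM * (1 + \<bar>a\<bar> + \<bar>r\<bar>)" using s0 cM0
        by (intro mult_left_mono) auto
      then have "(s * cM * 1 + 2 * L) * norm h \<le> (s * cM * (1 + \<bar>a\<bar> + \<bar>r\<bar>) + 2 * L) * norm h"
        by (intro mult_right_mono) auto
      moreover have "s * (cM * norm h) + (L * norm h + L * norm h) = (s * cM * 1 + 2 * L) * norm h"
        by (simp add: algebra_simps)
      ultimately show ?thesis by linarith
    qed
    finally show ?thesis unfolding s_def a_def r_def cM_def .
  next
    case False
    define \<alpha> where "\<alpha> = (if k = i - 1 then - a else 0) + (if k = i - 2 then r else 0)"
    define c0 where "c0 = \<theta> i - a *\<^sub>R (if k = i - 1 then 0 else \<theta> (i - 1)) + r *\<^sub>R (if k = i - 2 then 0 else \<theta> (i - 2))"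
    define c1 where "c1 = grad Q (\<theta> i) + gb (\<theta> i)"
    have fe: "(\<lambda>y. s *\<^sub>R (M *v ((\<theta>(k:=y)) i - a *\<^sub>R (\<theta>(k:=y)) (i - 1)
      + r *\<^sub>R (\<theta>(k:=y)) (i - 2))) + (grad Q ((\<theta>(k:=y)) i) + gb ((\<theta>(k:=y)) i))) =
      (\<lambda>y. s *\<^sub>R (M *v (c0 + \<alpha> *\<^sub>R y)) + c1)"
      using False by (auto simp: fun_eq_iff algebra_simps \<alpha>_def c0_def c1_def)
    have dF: "((\<lambda>y. s *\<^sub>R (M *v (c0 + \<alpha> *\<^sub>R y)) + c1) has_derivative (\<lambda>h. s *\<^sub>R (M *v (\<alpha> *\<^sub>R h)))) (at (\<theta> k))"
      by (rule aff_deriv)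
    have bl: "bounded_linear (\<lambda>h. s *\<^sub>R (M *v (\<alpha> *\<^sub>R h)))"
      using dF has_derivative_bounded_linear by blast
    have "J_theta M \<delta> Q b \<iota> \<theta> u i k *v h = s *\<^sub>R (M *v (\<alpha> *\<^sub>R h))"
      unfolding J fe using jac_unique[OF dF] matrix_vector_mul(3)[OF bl] by metis
    also have "norm \<dots> \<le> s * (cM * (\<bar>\<alpha>\<bar> * norm h))" using Mb[of "\<alpha> *\<^sub>R h"] s0 by (simp add: mult_left_mono)
    also have "\<dots> \<le> (s * cM * (1 + \<bar>a\<bar> + \<bar>r\<bar>) + 2 * L) * norm h"
    proof -
      have "\<bar>\<alpha>\<bar> \<le> 1 + \<bar>a\<bar> + \<bar>r\<bar>" unfolding \<alpha>_def by auto
      then have "s * cM * \<bar>\<alpha>\<bar> \<le> s * cM * (1 + \<bar>a\<bar> + \<bar>r\<bar>)" using s0 cM0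
        by (intro mult_left_mono) auto
      then have "s * (cM * (\<bar>\<alpha>\<bar> * norm h)) \<le> (s * cM * (1 + \<bar>a\<bar> + \<bar>r\<bar>)) * norm h"
        by (simp add: mult_right_mono mult.assoc[symmetric])
      also have "\<dots> \<le> (s * cM * (1 + \<bar>a\<bar> + \<bar>r\<bar>) + 2 * L) * norm h"
        using L0 by (simp add: mult_right_mono)
      finally show ?thesis .
    qed
    finally show ?thesis unfolding s_def a_def r_def cM_def .
  qed
qed

lemma Ju_block:
  fixes M :: "real^'n^'n" and Q :: "real^'n \<Rightarrow> real" and b :: "real^'n \<Rightarrow> real^'m \<Rightarrow> real"
  assumes sym: "transpose M = M"
    and Qd: "\<forall>x. Q differentiable (at x)"
    and bd: "\<forall>x. (\<lambda>y. b y (u (\<iota> i))) differentiable (at x)"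
    and hd: "(\<lambda>w. grad (\<lambda>y. b y w) (\<theta> i)) differentiable (at (u (\<iota> i)))"
    and hK: "norm (jac (\<lambda>w. grad (\<lambda>y. b y w) (\<theta> i)) (u (\<iota> i))) \<le> K"
  shows "norm (J_u M \<delta> Q b \<iota> \<theta> u i k *v h) \<le>
     (real CARD('n) * real CARD('m) * max K (norm (THE A. False :: real^'m^'n))) * norm h"
proof (cases "i = k")
  case False
  have "0 \<le> max K (norm (THE A. False :: real^'m^'n))" by (simp add: le_max_iff_disj)
  then show ?thesis using False by (simp add: J_u_def)
next
  case True
  define s where "s = 1 / (\<delta> i)^2"
  define a where "a = 1 + \<delta> i / \<delta> (i - 1)"
  define r where "r = \<delta> i / \<delta> (i - 1)"
  define V where "V = s *\<^sub>R (M *v (\<theta> i - a *\<^sub>R \<theta> (i - 1) + r *\<^sub>R \<theta> (i - 2))) + grad Q (\<theta> i)"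
  define g where "g = (\<lambda>w. pgrad (\<lambda>\<theta>'. Ebar M \<delta> Q b \<iota> i \<theta>' (u(\<iota> i := w))) i \<theta>)"
  define hh where "hh = (\<lambda>w. grad (\<lambda>y. b y w) (\<theta> i))"
  have gQ: "GDERIV Q (\<theta> i) :> grad Q (\<theta> i)" using Qd grad_exists by blast
  have case1: "g w = hh w + V" if G: "GDERIV (\<lambda>y. b y w) (\<theta> i) :> G" for w G
  proof -
    have G': "GDERIV (\<lambda>y. b y ((u(\<iota> i := w)) (\<iota> i))) (\<theta> i) :> G" using G by simp
    have "g w = s *\<^sub>R (M *v (\<theta> i - a *\<^sub>R \<theta> (i - 1) + r *\<^sub>R \<theta> (i - 2))) + (grad Q (\<theta> i) + G)"
      unfolding g_def s_def a_def r_def by (rule pgrad_Ebar[where \<theta>=\<theta> and i=i and u="u(\<iota> i := w)" and \<iota>=\<iota> and b=b, OF sym gQ G'])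
    moreover have "hh w = G" unfolding hh_def by (rule grad_unique[OF G])
    ultimately show ?thesis by (simp add: V_def algebra_simps)
  qed
  have alt: "g w = hh w + V \<or> g w = hh w" for w
  proof (cases "\<exists>G. GDERIV (\<lambda>y. b y w) (\<theta> i) :> G")
    case True then show ?thesis using case1 by blast
  next
    case nG: False
    define c where "c = 1 / (2 * (\<delta> i)^2)"
    define E where "E = (\<lambda>x. Ebar M \<delta> Q b \<iota> i (\<theta>(i := x)) (u(\<iota> i := w)))"
    have nE: "\<not> (\<exists>G. GDERIV E (\<theta> i) :> G)"
    proof
      assume "\<exists>G. GDERIV E (\<theta> i) :> G"
      then obtain G where G: "GDERIV E (\<theta> i) :> G" by blast
      have q: "GDERIV (\<lambda>x. c * Mnorm2 M (x - a *\<^sub>R \<theta> (i - 1) + r *\<^sub>R \<theta> (i - 2))) (\<theta> i)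
          :> (2*c) *\<^sub>R (M *v (\<theta> i - a *\<^sub>R \<theta> (i - 1) + r *\<^sub>R \<theta> (i - 2)))"
        by (rule gderiv_quad[OF sym])
      have "GDERIV (\<lambda>x. E x - (c * Mnorm2 M (x - a *\<^sub>R \<theta> (i - 1) + r *\<^sub>R \<theta> (i - 2)) + Q x)) (\<theta> i)
          :> G - ((2*c) *\<^sub>R (M *v (\<theta> i - a *\<^sub>R \<theta> (i - 1) + r *\<^sub>R \<theta> (i - 2))) + grad Q (\<theta> i))"
        by (rule GDERIV_diff[OF G GDERIV_add[OF q gQ]])
      moreover have "(\<lambda>x. E x - (c * Mnorm2 M (x - a *\<^sub>R \<theta> (i - 1) + r *\<^sub>R \<theta> (i - 2)) + Q x)) = (\<lambda>y. b y w)"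
        by (simp add: E_def Ebar_def c_def a_def r_def fun_eq_iff)
      ultimately show False using nG by auto
    qed
    have "g w = (THE G. False)" unfolding g_def pgrad_def using grad_none[OF nE] by (simp add: E_def)
    moreover have "hh w = (THE G. False)" unfolding hh_def using grad_none[OF nG] .
    ultimately show ?thesis by simp
  qed
  have at: "g (u (\<iota> i)) = hh (u (\<iota> i)) + V"
    using case1 grad_exists bd by blast
  have J: "J_u M \<delta> Q b \<iota> \<theta> u i k = jac g (u (\<iota> i))"
    using True by (simp add: J_u_def g_def)
  have "jac g (u (\<iota> i)) = jac hh (u (\<iota> i)) \<or> jac g (u (\<iota> i)) = (THE A. False)"
    by (rule transfer[where g=g and h=hh and V=V, OF alt at]) (use hd in \<open>simp add: hh_def\<close>)
  then have nb: "norm (jac g (u (\<iota> i))) \<le> max K (norm (THE A. False :: real^'m^'n))"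
    using hK unfolding hh_def by auto
  have "norm (J_u M \<delta> Q b \<iota> \<theta> u i k *v h) \<le> (real CARD('n) * real CARD('m) * norm (jac g (u (\<iota> i)))) * norm h"
    unfolding J by (rule matrix_bound)
  also have "\<dots> \<le> (real CARD('n) * real CARD('m) * max K (norm (THE A. False :: real^'m^'n))) * norm h"
    using nb by (intro mult_right_mono mult_left_mono) auto
  finally show ?thesis .
qed

theorem lemma3:
  fixes M :: "real^'n^'n" and N :: nat and \<delta> :: "int \<Rightarrow> real"
    and \<theta>0 \<theta>m1 :: "real^'n" and X :: "(real^'m) set"
    and Q :: "real^'n \<Rightarrow> real" and b :: "real^'n \<Rightarrow> real^'m \<Rightarrow> real"
    and L :: real and \<iota> :: "int \<Rightarrow> nat"
  assumes M_sym: "transpose M = M"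
    and M_pd: "\<forall>x. x \<noteq> 0 \<longrightarrow> x \<bullet> (M *v x) > 0"
    and N_ge: "N \<ge> 1"
    and \<delta>_pos: "\<forall>i\<in>{0..int N}. \<delta> i > 0"
    and Q_smooth: "twice_diff_loclip Q"
    and Q_curv: "curv_bounded L Q"
    and b_smooth: "\<forall>u\<in>X. twice_diff_loclip (\<lambda>x. b x u)"
    and b_curv: "\<forall>u\<in>X. curv_bounded L (\<lambda>x. b x u)"
    and b_mixed_diff: "\<forall>x. \<forall>u\<in>X. (\<lambda>w. grad (\<lambda>y. b y w) x) differentiable (at u)"
    and b_mixed_bdd: "\<exists>K. \<forall>x. \<forall>u\<in>X. norm (jac (\<lambda>w. grad (\<lambda>y. b y w) x) u) \<le> K"
  shows "\<exists>C. \<forall>\<theta> u. \<theta> 0 = \<theta>0 \<longrightarrow> \<theta> (-1) = \<theta>m1 \<longrightarrow> (\<forall>i\<in>{1..int N}. u (\<iota> i) \<in> X) \<longrightarrow>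
           sigma_max (J_theta M \<delta> Q b \<iota> \<theta> u) {1..int N} \<le> C \<and>
           sigma_max (J_u M \<delta> Q b \<iota> \<theta> u) {1..int N} \<le> C"
proof -
  obtain K where K: "\<forall>x. \<forall>u\<in>X. norm (jac (\<lambda>w. grad (\<lambda>y. b y w) x) u) \<le> K"
    using b_mixed_bdd by blast
  define I where "I = {1..int N}"
  have finI: "finite I" by (simp add: I_def)
  define cM where "cM = real CARD('n) * real CARD('n) * norm M"
  define t where "t = (\<lambda>i. 1 / (\<delta> i)^2 * cM *
       (1 + \<bar>1 + \<delta> i / \<delta> (i - 1)\<bar> + \<bar>\<delta> i / \<delta> (i - 1)\<bar>))"
  have t0: "t i \<ge> 0" for i by (simp add: t_def cM_def)
  define \<beta>1 where "\<beta>1 = (\<Sum>i\<in>I. t i) + 2 * L"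
  define \<beta>2 where "\<beta>2 = real CARD('n) * real CARD('m) * max K (norm (THE A. False :: real^'m^'n))"
  have Qd: "\<forall>x. Q differentiable (at x)" and Qgd: "\<forall>x. grad Q differentiable (at x)"
    using Q_smooth unfolding twice_diff_loclip_def by auto
  have Qlip: "L-lipschitz_on UNIV (grad Q)" using Q_curv unfolding curv_bounded_def by auto
  have L0: "L \<ge> 0" using Qlip lipschitz_on_nonneg by blast
  have b10: "\<beta>1 \<ge> 0" unfolding \<beta>1_def using L0 t0 by (simp add: sum_nonneg)
  have b20: "\<beta>2 \<ge> 0" unfolding \<beta>2_def by (simp add: le_max_iff_disj)
  define C where "C = max (max (sqrt (Max {})) (sqrt (real (card I) ^ 3 * \<beta>1\<^sup>2)))
                         (max (sqrt (Max {})) (sqrt (real (card I) ^ 3 * \<beta>2\<^sup>2)))"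
  show ?thesis
  proof (intro exI[of _ C] allI impI conjI)
    fix \<theta> :: "int \<Rightarrow> real^'n" and u :: "nat \<Rightarrow> real^'m"
    assume uX: "\<forall>i\<in>{1..int N}. u (\<iota> i) \<in> X"
    have bd: "\<forall>x. (\<lambda>y. b y (u (\<iota> i))) differentiable (at x)"
      and bgd: "\<forall>x. grad (\<lambda>y. b y (u (\<iota> i))) differentiable (at x)"
      and blip: "L-lipschitz_on UNIV (grad (\<lambda>y. b y (u (\<iota> i))))"
      if "i \<in> I" for i
      using b_smooth b_curv uX that unfolding I_def twice_diff_loclip_def curv_bounded_def by auto
    have B1: "norm (J_theta M \<delta> Q b \<iota> \<theta> u i k *v h) \<le> \<beta>1 * norm h"
      if "i \<in> I" "k \<in> I" for i k h
    proof -
      have "norm (J_theta M \<delta> Q b \<iota> \<theta> u i k *v h) \<le> (t i + 2 * L) * norm h"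
        unfolding t_def cM_def
        by (rule Jtheta_block[where i=i and u=u and \<iota>=\<iota> and b=b, OF M_sym Qd Qgd Qlip bd[OF that(1)] bgd[OF that(1)] blip[OF that(1)]])
      also have "\<dots> \<le> \<beta>1 * norm h"
      proof (rule mult_right_mono)
        have "t i \<le> (\<Sum>i\<in>I. t i)" by (rule member_le_sum) (use that finI t0 in auto)
        then show "t i + 2 * L \<le> \<beta>1" unfolding \<beta>1_def by simp
      qed simp
      finally show ?thesis .
    qed
    have B2: "norm (J_u M \<delta> Q b \<iota> \<theta> u i k *v h) \<le> \<beta>2 * norm h"
      if "i \<in> I" "k \<in> I" for i k h
      unfolding \<beta>2_def
    proof (rule Ju_block[where i=i and u=u and \<iota>=\<iota> and b=b, OF M_sym Qd bd[OF that(1)]])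
      have "u (\<iota> i) \<in> X" using uX that unfolding I_def by auto
      then show "(\<lambda>w. grad (\<lambda>y. b y w) (\<theta> i)) differentiable (at (u (\<iota> i)))"
        and "norm (jac (\<lambda>w. grad (\<lambda>y. b y w) (\<theta> i)) (u (\<iota> i))) \<le> K"
        using b_mixed_diff K by auto
    qed
    show "sigma_max (J_theta M \<delta> Q b \<iota> \<theta> u) {1..int N} \<le> C"
      using sigma_bound[where B="J_theta M \<delta> Q b \<iota> \<theta> u", OF finI B1 b10] unfolding C_def I_def by linarith
    show "sigma_max (J_u M \<delta> Q b \<iota> \<theta> u) {1..int N} \<le> C"
      using sigma_bound[where B="J_u M \<delta> Q b \<iota> \<theta> u", OF finI B2 b20] unfolding C_def I_def by linarith
  qed
qed

end
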